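(* Let $m\ge 1$ and for $i\in\{1,\dots,m\}$ let $f_i:\mathbb{R}^n\to\mathbb{R}\cup\{\infty\}$ be proper, lower semicontinuous, prox-bounded functions with respective thresholds of prox-boundedness $\bar r_i$. Let $r>\max_i\{\bar r_i\}$. Let $\delta:\Lambda\to\mathbb{R}$ be a continuous function with $\delta(e_i)=0$ for each canonical unit vector $e_i$ and $\delta(\lambda)>0$ for all other $\lambda\in\Lambda$, and define $$PA_r(x,\lambda):=-e_{r+\delta(\lambda)}\Big(-\sum_{i=1}^m\lambda_i e_rf_i\Big)(x).$$ Then for every $\lambda\in\Lambda$, $PA_r(\cdot,\lambda)$ is a proper function of $x$. Furthermore, if $\lambda\in\Lambda$ satisfies $\lambda_i\neq 1$ for all $i$, then $PA_r(\cdot,\lambda)$ is a lower-$\mathcal{C}^2$ function of $x$. Finally, if for some $i$ the function $f_i+\frac{r}{2}q$ is convex, then $PA_r(\cdot,e_i)=f_i$.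
   Context: $q(x)=|x|^2$. $\Lambda=\{\lambda\in\mathbb{R}^m:\lambda_i\ge 0\ \forall i,\ \sum_i\lambda_i=1\}$, and $e_i$ is the canonical unit vector with $i$-th component $1$. The Moreau envelope of $f$ with prox-parameter $r$ is $e_rf(x)=\inf_y\{f(y)+\frac r2|y-x|^2\}$. A proper function $f$ is prox-bounded if there exist $r>0$ and $\bar x$ with $e_rf(\bar x)>-\infty$; the infimum of all such $r$ is the threshold of prox-boundedness. A function is lower-$\mathcal{C}^2$ (on $\mathbb{R}^n$) if it is finite-valued and at every point $x$ the function plus some quadratic term is convex on an open convex neighborhood of $x$. *)

theory Defs
  imports "HOL-Analysis.Analysis" "HOL-Library.Extended_Real"
begin

text \<open>Extended-real valued functions on a Euclidean space model f : R^n -> R \<union> {\<infinity>}.\<close>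

definition q :: "'a::euclidean_space \<Rightarrow> real" where
  "q x = (norm x)\<^sup>2"

definition proper_fn :: "('a \<Rightarrow> ereal) \<Rightarrow> bool" where
  "proper_fn f \<longleftrightarrow> (\<forall>x. f x \<noteq> -\<infinity>) \<and> (\<exists>x. f x < \<infinity>)"

definition lsc_fn :: "('a::topological_space \<Rightarrow> ereal) \<Rightarrow> bool" where
  "lsc_fn f \<longleftrightarrow> (\<forall>x c. c < f x \<longrightarrow> eventually (\<lambda>y. c < f y) (at x))"

definition moreau_env :: "real \<Rightarrow> ('a::euclidean_space \<Rightarrow> ereal) \<Rightarrow> 'a \<Rightarrow> ereal" where
  "moreau_env r f x = (INF y. f y + ereal (r / 2 * (norm (y - x))\<^sup>2))"

definition prox_bounded :: "('a::euclidean_space \<Rightarrow> ereal) \<Rightarrow> bool" where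
  "prox_bounded f \<longleftrightarrow> (\<exists>r>0. \<exists>x. moreau_env r f x > -\<infinity>)"

definition prox_threshold :: "('a::euclidean_space \<Rightarrow> ereal) \<Rightarrow> real" where
  "prox_threshold f = Inf {r. r > 0 \<and> (\<exists>x. moreau_env r f x > -\<infinity>)}"

definition ext_convex :: "('a::real_vector \<Rightarrow> ereal) \<Rightarrow> bool" where
  "ext_convex f \<longleftrightarrow> (\<forall>x y. \<forall>t\<in>{0..1}.
     f ((1 - t) *\<^sub>R x + t *\<^sub>R y) \<le> ereal (1 - t) * f x + ereal t * f y)"

definition lower_C2 :: "('a::euclidean_space \<Rightarrow> ereal) \<Rightarrow> bool" where
  "lower_C2 f \<longleftrightarrow> (\<forall>x. \<bar>f x\<bar> \<noteq> \<infinity>) \<and>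
     (\<forall>x. \<exists>\<rho>::real. \<exists>U. open U \<and> convex U \<and> x \<in> U \<and>
        convex_on U (\<lambda>y. real_of_ereal (f y) + \<rho> * q y))"

text \<open>The unit simplex in R^m (m = CARD('m)).\<close>
definition Lambda_simplex :: "(real ^ 'm::finite) set" where
  "Lambda_simplex = {lam. (\<forall>i. lam $ i \<ge> 0) \<and> (\<Sum>i\<in>UNIV. lam $ i) = 1}"

definition PA :: "real \<Rightarrow> ((real ^ 'm::finite) \<Rightarrow> real) \<Rightarrow> ('m \<Rightarrow> 'a::euclidean_space \<Rightarrow> ereal)
                  \<Rightarrow> 'a \<Rightarrow> real ^ 'm \<Rightarrow> ereal" where
  "PA r \<delta> f x lam = - moreau_env (r + \<delta> lam)
      (\<lambda>z. - (\<Sum>i\<in>UNIV. ereal (lam $ i) * moreau_env r (f i) z)) x"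

end

theory Submission
  imports Defs
begin


lemma nd_sq: "(norm (a - b::'a::real_inner))^2 = (norm a)^2 - 2 * inner a b + (norm b)^2"
  by (simp add: power2_norm_eq_inner inner_diff_left inner_diff_right inner_commute)

lemma quad_ineq:
  fixes u v :: "'a::real_normed_vector"
  assumes "0 < a" "a < b"
  shows "a * (norm (u+v))^2 \<le> b * (norm u)^2 + a*b/(b-a) * (norm v)^2"
proof -
  define p where "p = norm u"
  define w where "w = norm v"
  have "norm (u+v) \<le> p + w" unfolding p_def w_def by (rule norm_triangle_ineq)
  hence "(norm (u+v))^2 \<le> (p+w)^2" by (intro power_mono) auto
  hence 1: "a * (norm (u+v))^2 \<le> a * (p+w)^2" using assms by simp
  have key: "a*(b-a)*(p+w)^2 + ((b-a)*p - a*w)^2 = (b*(b-a)*p^2 + a*b*w^2)"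
    by (simp add: power2_eq_square algebra_simps)
  have "a*(b-a)*(p+w)^2 \<le> b*(b-a)*p^2 + a*b*w^2" using key by (smt (verit) zero_le_power2)
  hence "a*(p+w)^2 \<le> (b*(b-a)*p^2 + a*b*w^2)/(b-a)" using assms
    by (simp add: pos_le_divide_eq mult.commute mult.left_commute)
  also have "\<dots> = b*p^2 + a*b/(b-a)*w^2" using assms by (simp add: field_simps)
  finally show ?thesis using 1 unfolding p_def w_def by linarith
qed

lemma lt_inf_aux: "(x::ereal) \<le> y + ereal t \<Longrightarrow> y < \<infinity> \<Longrightarrow> x < \<infinity>"
  by (cases y; cases x) auto

lemma env_upper: "moreau_env r f x \<le> f z + ereal (r/2 * (norm (z - x))^2)"
  unfolding moreau_env_def by (rule INF_lower) simp

lemma env_lower: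
  assumes "\<And>y. ereal (c - a/2 * (norm (y - x0))^2) \<le> f y" "0 < a" "a < b"
  shows "ereal (c - a*b/(2*(b-a)) * (norm (x - x0))^2) \<le> moreau_env b f x"
  unfolding moreau_env_def
proof (rule INF_greatest)
  fix y
  have q: "a * (norm ((y - x) + (x - x0)))^2 \<le> b * (norm (y-x))^2 + a*b/(b-a) * (norm (x - x0))^2"
    by (rule quad_ineq[OF assms(2,3)])
  have "c - a*b/(2*(b-a)) * (norm (x - x0))^2 \<le> (c - a/2 * (norm (y - x0))^2) + b/2 * (norm (y-x))^2"
  proof -
    have e: "a*b/(2*(b-a)) * (norm (x - x0))^2 = (a*b/(b-a) * (norm (x - x0))^2)/2" by simp
    define N1 where "N1 = (norm (y - x0))^2"
    define N2 where "N2 = (norm (y - x))^2"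
    define K where "K = a*b/(b-a) * (norm (x - x0))^2"
    have q': "a * N1 \<le> b * N2 + K" using q unfolding N1_def N2_def K_def by simp
    have "a/2 * N1 \<le> b/2 * N2 + K/2" using q' by (simp add: field_simps)
    thus ?thesis unfolding e N1_def[symmetric] N2_def[symmetric] K_def[symmetric] by linarith
  qed
  hence "ereal (c - a*b/(2*(b-a)) * (norm (x - x0))^2) \<le> ereal (c - a/2 * (norm (y - x0))^2) + ereal (b/2 * (norm (y-x))^2)"
    by simp
  also have "\<dots> \<le> f y + ereal (b/2 * (norm (y-x))^2)"
    using assms(1) by (rule add_right_mono)
  finally show "ereal (c - a*b/(2*(b-a)) * (norm (x - x0))^2) \<le> f y + ereal (b/2 * (norm (y-x))^2)" .
qed

lemma threshold_facts:
  assumes pr: "proper_fn f" and pb: "prox_bounded f" and rg: "r > prox_threshold f"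
  shows "0 < r \<and> (\<exists>a c x0. 0 < a \<and> a < r \<and> (\<forall>y. ereal (c - a/2 * (norm (y - x0))^2) \<le> f y))"
proof -
  define S where "S = {r. r > 0 \<and> (\<exists>x. moreau_env r f x > -\<infinity>)}"
  have ne: "S \<noteq> {}" using pb unfolding prox_bounded_def S_def by auto
  have bd: "bdd_below S" unfolding S_def by (rule bdd_belowI[of _ 0]) auto
  have "Inf S \<ge> 0" using ne by (rule cInf_greatest) (auto simp: S_def)
  hence r0: "r > 0" using rg unfolding prox_threshold_def S_def[symmetric] by linarith
  obtain a where aS: "a \<in> S" and ar: "a < r"
    using cInf_lessD[OF ne] rg unfolding prox_threshold_def S_def[symmetric] by blast
  obtain x0 where x0: "moreau_env a f x0 > -\<infinity>" using aS unfolding S_def by auto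
  have a0: "a > 0" using aS unfolding S_def by auto
  obtain z where z: "f z < \<infinity>" using pr unfolding proper_fn_def by auto
  have "moreau_env a f x0 < \<infinity>"
    using env_upper[of a f x0 z] z by (rule lt_inf_aux)
  then obtain c where c: "moreau_env a f x0 = ereal c" using x0 by (cases "moreau_env a f x0") auto
  have "\<forall>y. ereal (c - a/2 * (norm (y - x0))^2) \<le> f y"
  proof
    fix y
    have le: "ereal c \<le> f y + ereal (a/2 * (norm (y - x0))^2)"
      using env_upper[of a f x0 y] c by simp
    show "ereal (c - a/2 * (norm (y - x0))^2) \<le> f y"
    proof (cases "f y")
      case (real fy) thus ?thesis using le by simp
    next
      case PInf thus ?thesis by simp
    next
      case MInf thus ?thesis using pr unfolding proper_fn_def by auto
    qed
  qed
  thus ?thesis using r0 a0 ar by blast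
qed

lemma env_finite:
  assumes pr: "proper_fn f" and pb: "prox_bounded f" and rg: "r > prox_threshold f"
  shows "\<bar>moreau_env r f x\<bar> \<noteq> \<infinity>"
proof -
  obtain a c x0 where a: "0 < a" "a < r" and m: "\<forall>y. ereal (c - a/2 * (norm (y - x0))^2) \<le> f y"
    using threshold_facts[OF assms] by blast
  have lo: "ereal (c - a*r/(2*(r-a)) * (norm (x - x0))^2) \<le> moreau_env r f x"
    using env_lower[of c a x0 f r x] m a by blast
  obtain z where z: "f z < \<infinity>" using pr unfolding proper_fn_def by auto
  have "moreau_env r f x < \<infinity>"
    using env_upper[of r f x z] z by (rule lt_inf_aux)
  thus ?thesis using lo by auto
qed



lemma lsc_add_cont:
  assumes lsc: "lsc_fn f" and nm: "\<And>x. f x \<noteq> -\<infinity>" and kc: "\<And>x. isCont k x"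
  shows "lsc_fn (\<lambda>x. f x + ereal (k x))"
  unfolding lsc_fn_def
proof (intro allI impI)
  fix x c assume cx: "c < f x + ereal (k x)"
  show "\<forall>\<^sub>F y in at x. c < f y + ereal (k y)"
  proof (cases c)
    case MInf
    have "\<And>y. c < f y + ereal (k y)" 
    proof -
      fix y show "c < f y + ereal (k y)" using MInf nm[of y] by (cases "f y") auto
    qed
    thus ?thesis by simp
  next
    case PInf thus ?thesis using cx by simp
  next
    case (real c0)
    have "ereal (c0 - k x) < f x" using cx real nm[of x] by (cases "f x") auto
    then obtain d where d1: "ereal (c0 - k x) < ereal d" and d2: "ereal d < f x"
      using ereal_dense2 by blast
    have ev1: "\<forall>\<^sub>F y in at x. ereal d < f y" using lsc d2 unfolding lsc_fn_def by blast
    have "(k \<longlongrightarrow> k x) (at x)" using kc[of x] by (simp add: isCont_def)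
    moreover have "d - (c0 - k x) > 0" using d1 by simp
    ultimately have ev2: "\<forall>\<^sub>F y in at x. dist (k y) (k x) < d - (c0 - k x)"
      by (rule tendstoD)
    show ?thesis
    proof (rule eventually_mono[OF eventually_conj[OF ev1 ev2]])
      fix y assume h: "ereal d < f y \<and> dist (k y) (k x) < d - (c0 - k x)"
      hence kk: "k y > c0 - d" by (simp add: dist_real_def abs_less_iff)
      show "c < f y + ereal (k y)"
      proof (cases "f y")
        case (real fy) thus ?thesis using h kk \<open>c = ereal c0\<close> by simp
      next
        case PInf thus ?thesis using \<open>c = ereal c0\<close> by simp
      next
        case MInf thus ?thesis using nm by simp
      qed
    qed
  qed
qed

lemma epi_closed:
  fixes g :: "'a::euclidean_space \<Rightarrow> ereal"
  assumes lsc: "lsc_fn g"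
  shows "closed {p::'a \<times> real. g (fst p) \<le> ereal (snd p)}"
  unfolding closed_sequential_limits
proof (intro allI impI, elim conjE)
  fix X :: "nat \<Rightarrow> 'a \<times> real" and l
  assume XE: "\<forall>n. X n \<in> {p. g (fst p) \<le> ereal (snd p)}" and Xl: "X \<longlonglongrightarrow> l"
  show "l \<in> {p. g (fst p) \<le> ereal (snd p)}"
  proof (rule ccontr)
    assume "l \<notin> {p. g (fst p) \<le> ereal (snd p)}"
    hence "ereal (snd l) < g (fst l)" by simp
    then obtain d where d1: "ereal (snd l) < ereal d" and d2: "ereal d < g (fst l)"
      using ereal_dense2 by blast
    have "\<forall>\<^sub>F y in at (fst l). ereal d < g y" using lsc d2 unfolding lsc_fn_def by blast
    hence "\<forall>\<^sub>F y in nhds (fst l). y \<noteq> fst l \<longrightarrow> ereal d < g y"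
      by (simp add: eventually_at_filter)
    hence evn: "\<forall>\<^sub>F y in nhds (fst l). ereal d < g y"
      by (rule eventually_mono) (use d2 in auto)
    have t1: "((\<lambda>n. fst (X n)) \<longlongrightarrow> fst l) sequentially" using Xl by (rule tendsto_fst)
    have e1: "\<forall>\<^sub>F n in sequentially. ereal d < g (fst (X n))"
      using t1 evn unfolding filterlim_iff by blast
    have t2: "((\<lambda>n. snd (X n)) \<longlongrightarrow> snd l) sequentially" using Xl by (rule tendsto_snd)
    have e2: "\<forall>\<^sub>F n in sequentially. snd (X n) < d"
      using order_tendstoD(2)[OF t2] d1 by simp
    obtain N where "ereal d < g (fst (X N))" "snd (X N) < d"
      using eventually_happens'[OF sequentially_bot eventually_conj[OF e1 e2]] by blast
    moreover have "g (fst (X N)) \<le> ereal (snd (X N))" using XE by simp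
    ultimately show False by (metis ereal_less_eq(3) leD less_le_trans order.strict_implies_order)
  qed
qed

lemma epi_convex:
  fixes g :: "'a::euclidean_space \<Rightarrow> ereal"
  assumes cv: "ext_convex g"
  shows "convex {p::'a \<times> real. g (fst p) \<le> ereal (snd p)}"
  unfolding convex_def
proof (intro ballI allI impI)
  fix p p' :: "'a \<times> real" and u v :: real
  assume p: "p \<in> {p. g (fst p) \<le> ereal (snd p)}" and p': "p' \<in> {p. g (fst p) \<le> ereal (snd p)}"
    and u: "0 \<le> u" and v: "0 \<le> v" and uv: "u + v = 1"
  have uu: "u = 1 - v" using uv by simp
  have v1: "v \<in> {0..1}" using u v uv by auto
  have "g (fst (u *\<^sub>R p + v *\<^sub>R p')) = g ((1 - v) *\<^sub>R fst p + v *\<^sub>R fst p')" by (simp add: uu)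
  also have "\<dots> \<le> ereal (1 - v) * g (fst p) + ereal v * g (fst p')"
    using cv v1 unfolding ext_convex_def by blast
  also have "\<dots> \<le> ereal (1 - v) * ereal (snd p) + ereal v * ereal (snd p')"
    using p p' u v uu by (intro add_mono ereal_mult_left_mono) auto
  also have "\<dots> = ereal (snd (u *\<^sub>R p + v *\<^sub>R p'))" by (simp add: uu)
  finally show "u *\<^sub>R p + v *\<^sub>R p' \<in> {p. g (fst p) \<le> ereal (snd p)}" by simp
qed



lemma FM:
  fixes g :: "'a::euclidean_space \<Rightarrow> ereal"
  assumes cv: "ext_convex g" and lsc: "lsc_fn g" and nm: "\<And>z. g z \<noteq> -\<infinity>"
    and dom: "g z0 < \<infinity>" and minor: "\<And>z. ereal (inner w0 z + b0) \<le> g z"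
    and al: "ereal \<alpha> < g x"
  shows "\<exists>w b. (\<forall>z. ereal (inner w z + b) \<le> g z) \<and> \<alpha> \<le> inner w x + b"
proof -
  define E where "E = {p::'a \<times> real. g (fst p) \<le> ereal (snd p)}"
  have cE: "convex E" unfolding E_def by (rule epi_convex[OF cv])
  have clE: "closed E" unfolding E_def by (rule epi_closed[OF lsc])
  have nE: "(x, \<alpha>) \<notin> E" unfolding E_def using al by auto
  obtain a c where ac1: "inner a (x, \<alpha>) < c" and ac2: "\<forall>p\<in>E. inner a p > c"
    using separating_hyperplane_closed_point[OF cE clE nE] by blast
  obtain w \<beta> where a: "a = (w, \<beta>)" by (cases a)
  have sep1: "inner w x + \<beta> * \<alpha> < c" using ac1 a by (simp add: inner_prod_def)
  have sep2: "\<And>z t. g z \<le> ereal t \<Longrightarrow> inner w z + \<beta> * t > c"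
    using ac2 a unfolding E_def by (auto simp: inner_prod_def)
  obtain T where T: "g z0 = ereal T" using dom nm[of z0] by (cases "g z0") auto
  have b0: "\<beta> \<ge> 0"
  proof (rule ccontr)
    assume "\<not> \<beta> \<ge> 0"
    hence bn: "\<beta> < 0" by simp
    define t where "t = max T ((inner w z0 - c) / (- \<beta>))"
    have "g z0 \<le> ereal t" using T unfolding t_def by simp
    hence "inner w z0 + \<beta> * t > c" by (rule sep2)
    moreover have "(inner w z0 - c) / (- \<beta>) \<le> t" unfolding t_def by simp
    hence "inner w z0 - c \<le> t * (- \<beta>)" using bn pos_divide_le_eq[of "- \<beta>" "inner w z0 - c" t] by simp
    ultimately show False by (simp add: algebra_simps)
  qed
  show ?thesis
  proof (cases "\<beta> > 0")
    case True
    define w' where "w' = (- (1/\<beta>)) *\<^sub>R w"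
    define b' where "b' = c / \<beta>"
    have "\<forall>z. ereal (inner w' z + b') \<le> g z"
    proof
      fix z show "ereal (inner w' z + b') \<le> g z"
      proof (cases "g z")
        case (real gz)
        hence "inner w z + \<beta> * gz > c" using sep2 by simp
        hence "(c - inner w z) / \<beta> < gz" using True by (simp add: divide_less_eq algebra_simps)
        moreover have "inner w' z + b' = (c - inner w z) / \<beta>"
          unfolding w'_def b'_def using True by (simp add: field_simps)
        ultimately show ?thesis using real by simp
      next
        case PInf thus ?thesis by simp
      next
        case MInf thus ?thesis using nm by simp
      qed
    qed
    moreover have "\<alpha> \<le> inner w' x + b'"
    proof -
      have "inner w' x + b' = (c - inner w x) / \<beta>"
        unfolding w'_def b'_def using True by (simp add: field_simps)
      moreover have "\<alpha> < (c - inner w x) / \<beta>" using sep1 True by (simp add: less_divide_eq algebra_simps)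
      ultimately show ?thesis by simp
    qed
    ultimately show ?thesis by blast
  next
    case False
    hence bz: "\<beta> = 0" using b0 by simp
    have s1: "inner w x < c" using sep1 bz by simp
    have s2: "\<And>z. g z < \<infinity> \<Longrightarrow> inner w z > c"
    proof -
      fix z assume "g z < \<infinity>"
      then obtain gz where "g z = ereal gz" using nm[of z] by (cases "g z") auto
      thus "inner w z > c" using sep2[of z gz] bz by simp
    qed
    define k where "k = max 0 ((\<alpha> - inner w0 x - b0) / (c - inner w x))"
    define w' where "w' = w0 - k *\<^sub>R w"
    define b' where "b' = b0 + k * c"
    have k0: "k \<ge> 0" unfolding k_def by simp
    have "\<forall>z. ereal (inner w' z + b') \<le> g z"
    proof
      fix z show "ereal (inner w' z + b') \<le> g z"
      proof (cases "g z < \<infinity>")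
        case True
        have "k * (c - inner w z) \<le> 0" using s2[OF True] k0 by (simp add: mult_nonneg_nonpos)
        hence "inner w' z + b' \<le> inner w0 z + b0"
          unfolding w'_def b'_def by (simp add: inner_diff_left algebra_simps)
        hence "ereal (inner w' z + b') \<le> ereal (inner w0 z + b0)" by simp
        also have "\<dots> \<le> g z" by (rule minor)
        finally show ?thesis .
      next
        case False thus ?thesis by (simp add: top.not_eq_extremum)
      qed
    qed
    moreover have "\<alpha> \<le> inner w' x + b'"
    proof -
      have cp: "c - inner w x > 0" using s1 by simp
      have "(\<alpha> - inner w0 x - b0) / (c - inner w x) \<le> k" unfolding k_def by simp
      hence "\<alpha> - inner w0 x - b0 \<le> k * (c - inner w x)" using cp by (simp add: divide_le_eq)
      thus ?thesis unfolding w'_def b'_def by (simp add: inner_diff_left algebra_simps)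
    qed
    ultimately show ?thesis by blast
  qed
qed



lemma PA_eq:
  assumes fin: "\<And>i z. \<bar>moreau_env r (f i) z\<bar> \<noteq> \<infinity>"
  shows "PA r \<delta> f x lam = (SUP y. ereal ((\<Sum>i\<in>UNIV. lam$i * real_of_ereal (moreau_env r (f i) y))
            - (r + \<delta> lam)/2 * (norm (y - x))^2))"
proof -
  define h where "h y = (\<Sum>i\<in>UNIV. lam$i * real_of_ereal (moreau_env r (f i) y))" for y
  have e: "(\<Sum>i\<in>UNIV. ereal (lam$i) * moreau_env r (f i) z) = ereal (h z)" for z
  proof -
    have "\<And>i. ereal (lam$i) * moreau_env r (f i) z = ereal (lam$i * real_of_ereal (moreau_env r (f i) z))"
      using fin by (metis ereal_real times_ereal.simps(1))
    thus ?thesis unfolding h_def by simp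
  qed
  have "PA r \<delta> f x lam = - (INF y. ereal (- (h y - (r + \<delta> lam)/2 * (norm (y - x))^2)))"
    unfolding PA_def moreau_env_def[of "r + \<delta> lam"] e by (simp add: algebra_simps)
  also have "\<dots> = (SUP y. - ereal (- (h y - (r + \<delta> lam)/2 * (norm (y - x))^2)))"
    by (rule ereal_SUP_uminus_eq[symmetric])
  also have "\<dots> = (SUP y. ereal (h y - (r + \<delta> lam)/2 * (norm (y - x))^2))" by simp
  finally show ?thesis unfolding h_def .
qed

lemma axis_sum: "(\<Sum>i\<in>UNIV. axis j (1::real) $ i * e i) = e j"
proof -
  have "(\<Sum>i\<in>UNIV. axis j (1::real) $ i * e i) = (\<Sum>i\<in>UNIV. if i = j then e i else 0)"
    by (rule sum.cong) (auto simp: axis_def)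
  thus ?thesis by simp
qed

lemma sup_bdd:
  fixes e :: "'m::finite \<Rightarrow> 'a::euclidean_space \<Rightarrow> real"
  assumes r0: "0 < r" and rs: "r < s" and lam: "lam \<in> Lambda_simplex"
    and eb: "\<And>i y. e i y \<le> F i + r/2 * (norm (z i - y))^2"
  shows "(SUP y. ereal ((\<Sum>i\<in>UNIV. lam$i * e i y) - s/2 * (norm (y - x))^2))
           \<le> ereal (\<Sum>i\<in>UNIV. lam$i * (F i + r * s /(2*(s-r)) * (norm (x - z i))^2))"
proof (rule SUP_least)
  fix y
  have l0: "\<And>i. lam$i \<ge> 0" and l1: "(\<Sum>i\<in>UNIV. lam$i) = 1" using lam unfolding Lambda_simplex_def by auto
  have each: "e i y - s/2 * (norm (y - x))^2 \<le> F i + r * s /(2*(s-r)) * (norm (x - z i))^2" for i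
  proof -
    have q: "r * (norm ((y - x) + (x - z i)))^2 \<le> s * (norm (y - x))^2 + r * s /(s-r) * (norm (x - z i))^2"
      by (rule quad_ineq[OF r0 rs])
    have nn: "norm (z i - y) = norm ((y - x) + (x - z i))" by (simp add: norm_minus_commute)
    define N1 where "N1 = (norm ((y - x) + (x - z i)))^2"
    define N2 where "N2 = (norm (y - x))^2"
    define K where "K = r * s /(s-r) * (norm (x - z i))^2"
    have e2: "r * s /(2*(s-r)) * (norm (x - z i))^2 = K/2" unfolding K_def by simp
    have q': "r * N1 \<le> s * N2 + K" using q unfolding N1_def N2_def K_def .
    have "r/2 * N1 = (r * N1)/2" "s/2 * N2 = (s * N2)/2" by simp_all
    hence "r/2 * N1 \<le> s/2 * N2 + K/2" using q' by linarith
    moreover have "e i y \<le> F i + r/2 * N1" using eb[of i y] nn unfolding N1_def by simp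
    ultimately show ?thesis unfolding e2 N2_def[symmetric] by linarith
  qed
  have "(\<Sum>i\<in>UNIV. lam$i * e i y) - s/2 * (norm (y - x))^2
        = (\<Sum>i\<in>UNIV. lam$i * (e i y - s/2 * (norm (y - x))^2))"
  proof -
    define C where "C = s/2 * (norm (y - x))^2"
    have "(\<Sum>i\<in>UNIV. lam$i * (e i y - C)) = (\<Sum>i\<in>UNIV. lam$i * e i y) - (\<Sum>i\<in>UNIV. lam$i) * C"
      by (simp add: right_diff_distrib sum_subtractf sum_distrib_right)
    thus ?thesis using l1 unfolding C_def by simp
  qed
  also have "\<dots> \<le> (\<Sum>i\<in>UNIV. lam$i * (F i + r * s /(2*(s-r)) * (norm (x - z i))^2))"
    by (intro sum_mono mult_left_mono each l0)
  finally show "ereal ((\<Sum>i\<in>UNIV. lam$i * e i y) - s/2 * (norm (y - x))^2)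
           \<le> ereal (\<Sum>i\<in>UNIV. lam$i * (F i + r * s /(2*(s-r)) * (norm (x - z i))^2))" by simp
qed

lemma sup_convex:
  fixes h :: "'a::euclidean_space \<Rightarrow> real"
  assumes P: "\<And>x. P x = (SUP y. ereal (h y - s/2 * (norm (y - x))^2))"
    and fin: "\<And>x. \<bar>P x\<bar> \<noteq> \<infinity>"
  shows "convex_on UNIV (\<lambda>x. real_of_ereal (P x) + s/2 * q x)"
proof (rule convex_onI)
  show "convex (UNIV :: 'a set)" by simp
  fix t :: real and a b :: 'a
  assume t0: "0 < t" and t1: "t < 1"
  define c where "c = (1 - t) *\<^sub>R a + t *\<^sub>R b"
  have Pe: "P x = ereal (real_of_ereal (P x))" for x using fin[of x] by (simp add: ereal_real)
  define A where "A y x = h y - s/2 * (norm y)^2 + s * inner y x" for y x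
  have Aid: "h y - s/2 * (norm (y - x))^2 = A y x - s/2 * q x" for y x
    unfolding A_def q_def nd_sq by (simp add: algebra_simps)
  have Ac: "A y c = (1 - t) * A y a + t * A y b" for y
  proof -
    have ic: "inner y c = (1 - t) * inner y a + t * inner y b" by (simp add: c_def inner_add_right)
    define H where "H = h y - s/2 * (norm y)^2"
    show ?thesis unfolding A_def H_def[symmetric] ic by (simp add: algebra_simps)
  qed
  have Ale: "A y x \<le> real_of_ereal (P x) + s/2 * q x" for y x
  proof -
    have "ereal (h y - s/2 * (norm (y - x))^2) \<le> P x" unfolding P[of x] by (rule SUP_upper) simp
    hence "h y - s/2 * (norm (y - x))^2 \<le> real_of_ereal (P x)" by (subst (asm) Pe) simp
    thus ?thesis unfolding Aid by simp
  qed
  define R where "R = (1 - t) * (real_of_ereal (P a) + s/2 * q a) + t * (real_of_ereal (P b) + s/2 * q b)"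
  have "P c \<le> ereal (R - s/2 * q c)"
    unfolding P[of c]
  proof (rule SUP_least)
    fix y
    have "A y c \<le> R" unfolding Ac R_def using t0 t1 Ale[of y a] Ale[of y b]
      by (intro add_mono mult_left_mono) auto
    thus "ereal (h y - s/2 * (norm (y - c))^2) \<le> ereal (R - s/2 * q c)" unfolding Aid by simp
  qed
  hence "real_of_ereal (P c) \<le> R - s/2 * q c" by (subst (asm) Pe) simp
  thus "real_of_ereal (P ((1 - t) *\<^sub>R a + t *\<^sub>R b)) + s/2 * q ((1 - t) *\<^sub>R a + t *\<^sub>R b)
        \<le> (1 - t) * (real_of_ereal (P a) + s/2 * q a) + t * (real_of_ereal (P b) + s/2 * q b)"
    unfolding c_def[symmetric] R_def by simp
qed



theorem mainTheorem1:
  fixes f :: "'m::finite \<Rightarrow> 'a::euclidean_space \<Rightarrow> ereal"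
    and \<delta> :: "real ^ 'm \<Rightarrow> real"
    and r :: real
  assumes proper: "\<And>i. proper_fn (f i)"
    and lsc: "\<And>i. lsc_fn (f i)"
    and pb: "\<And>i. prox_bounded (f i)"
    and r_gt: "\<And>i. r > prox_threshold (f i)"
    and \<delta>_cont: "continuous_on Lambda_simplex \<delta>"
    and \<delta>_vert: "\<And>i. \<delta> (axis i 1) = 0"
    and \<delta>_pos: "\<And>lam. lam \<in> Lambda_simplex \<Longrightarrow> (\<forall>i. lam \<noteq> axis i 1) \<Longrightarrow> \<delta> lam > 0"
  shows "(\<forall>lam\<in>Lambda_simplex. proper_fn (\<lambda>x. PA r \<delta> f x lam))
       \<and> (\<forall>lam\<in>Lambda_simplex. (\<forall>i. lam $ i \<noteq> 1) \<longrightarrow> lower_C2 (\<lambda>x. PA r \<delta> f x lam))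
       \<and> (\<forall>i. ext_convex (\<lambda>x. f i x + ereal (r / 2 * q x)) \<longrightarrow> (\<lambda>x. PA r \<delta> f x (axis i 1)) = f i)"
proof -
  have r0: "0 < r" using threshold_facts[OF proper pb r_gt] by blast
  have fin: "\<bar>moreau_env r (f i) z\<bar> \<noteq> \<infinity>" for i z using env_finite[OF proper[of i] pb[of i] r_gt[of i]] .
  have nm: "\<And>i z. f i z \<noteq> -\<infinity>" using proper unfolding proper_fn_def by blast
  define e where "e i y = real_of_ereal (moreau_env r (f i) y)" for i y
  have me: "moreau_env r (f i) y = ereal (e i y)" for i y
    unfolding e_def using fin[of i y] by (simp add: ereal_real)
  have eup: "ereal (e i y) \<le> f i z + ereal (r/2 * (norm (z - y))^2)" for i y z
    using env_upper[of r "f i" y z] unfolding me .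
  have PAe: "PA r \<delta> f x lam = (SUP y. ereal ((\<Sum>i\<in>UNIV. lam$i * e i y) - (r + \<delta> lam)/2 * (norm (y - x))^2))" for x lam
    unfolding e_def by (rule PA_eq[OF fin])
  have lowb: "ereal (\<Sum>i\<in>UNIV. lam$i * e i x) \<le> PA r \<delta> f x lam" for x lam
    unfolding PAe by (rule SUP_upper2[of x]) auto
  have vert: "PA r \<delta> f x (axis i 1) = (SUP y. ereal (e i y - r/2 * (norm (y - x))^2))" for i x
    unfolding PAe axis_sum \<delta>_vert by simp
  have vert_le: "PA r \<delta> f x (axis i 1) \<le> f i x" for i x
    unfolding vert
  proof (rule SUP_least)
    fix y
    have "ereal (e i y) \<le> f i x + ereal (r/2 * (norm (x - y))^2)" by (rule eup)
    thus "ereal (e i y - r/2 * (norm (y - x))^2) \<le> f i x"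
      using nm[of i x] by (cases "f i x") (auto simp: norm_minus_commute)
  qed
  obtain z where z: "\<And>i. f i (z i) < \<infinity>"
    using proper unfolding proper_fn_def by metis
  define F where "F i = real_of_ereal (f i (z i))" for i
  have Fz: "f i (z i) = ereal (F i)" for i
    unfolding F_def using z[of i] nm[of i "z i"] by (cases "f i (z i)") auto
  have eb: "e i y \<le> F i + r/2 * (norm (z i - y))^2" for i y
    using eup[of i y "z i"] unfolding Fz by simp
  have nv_fin: "\<bar>PA r \<delta> f x lam\<bar> \<noteq> \<infinity>" if lam: "lam \<in> Lambda_simplex" and dp: "\<delta> lam > 0" for x lam
  proof -
    have "PA r \<delta> f x lam \<le> ereal (\<Sum>i\<in>UNIV. lam$i * (F i + r * (r + \<delta> lam)/(2*((r + \<delta> lam)-r)) * (norm (x - z i))^2))"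
      unfolding PAe by (rule sup_bdd[OF r0 _ lam eb]) (use dp in simp)
    moreover have "ereal (\<Sum>i\<in>UNIV. lam$i * e i x) \<le> PA r \<delta> f x lam" by (rule lowb)
    ultimately show ?thesis by auto
  qed
  have part1: "\<forall>lam\<in>Lambda_simplex. proper_fn (\<lambda>x. PA r \<delta> f x lam)"
  proof
    fix lam :: "real^'m" assume lam: "lam \<in> Lambda_simplex"
    have "\<forall>x. PA r \<delta> f x lam \<noteq> -\<infinity>" using lowb by (metis MInfty_neq_ereal(2) ereal_infty_less_eq(2))
    moreover have "\<exists>x. PA r \<delta> f x lam < \<infinity>"
    proof (cases "\<exists>i. lam = axis i 1")
      case True
      then obtain i where "lam = axis i 1" by blast
      thus ?thesis using vert_le[of _ i] z[of i] by (metis le_less_trans)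
    next
      case False
      hence "\<delta> lam > 0" using \<delta>_pos lam by blast
      thus ?thesis using nv_fin[OF lam] by (metis less_PInf_Ex_of_nat PInfty_neq_ereal(1) abs_ereal.simps(3) ereal_infty_less(1) less_ereal.simps(1) not_infty_ereal)
    qed
    ultimately show "proper_fn (\<lambda>x. PA r \<delta> f x lam)" unfolding proper_fn_def by blast
  qed
  have part2: "\<forall>lam\<in>Lambda_simplex. (\<forall>i. lam $ i \<noteq> 1) \<longrightarrow> lower_C2 (\<lambda>x. PA r \<delta> f x lam)"
  proof (intro ballI impI)
    fix lam :: "real^'m" assume lam: "lam \<in> Lambda_simplex" and n1: "\<forall>i. lam $ i \<noteq> 1"
    have "\<forall>i. lam \<noteq> axis i 1" using n1 by (metis axis_nth)
    hence dp: "\<delta> lam > 0" using \<delta>_pos lam by blast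
    have fx: "\<And>x. \<bar>PA r \<delta> f x lam\<bar> \<noteq> \<infinity>" using nv_fin[OF lam dp] .
    have cv: "convex_on UNIV (\<lambda>x. real_of_ereal (PA r \<delta> f x lam) + (r + \<delta> lam)/2 * q x)"
      by (rule sup_convex[OF PAe fx])
    show "lower_C2 (\<lambda>x. PA r \<delta> f x lam)"
      unfolding lower_C2_def using fx cv by blast
  qed
  have part3: "\<forall>i. ext_convex (\<lambda>x. f i x + ereal (r / 2 * q x)) \<longrightarrow> (\<lambda>x. PA r \<delta> f x (axis i 1)) = f i"
  proof (intro allI impI)
    fix i assume cvx: "ext_convex (\<lambda>x. f i x + ereal (r / 2 * q x))"
    define g where "g x = f i x + ereal (r / 2 * q x)" for x
    have cvg: "ext_convex g" using cvx unfolding g_def .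
    have kc: "isCont (\<lambda>x. r / 2 * q x) x" for x unfolding q_def by (intro continuous_intros)
    have lscg: "lsc_fn g" unfolding g_def by (rule lsc_add_cont[OF lsc nm kc])
    have nmg: "\<And>x. g x \<noteq> -\<infinity>" unfolding g_def using nm by simp
    have domg: "g (z i) < \<infinity>" unfolding g_def using Fz[of i] by simp
    obtain a c x0 where a: "0 < a" "a < r" and mi: "\<forall>y. ereal (c - a/2 * (norm (y - x0))^2) \<le> f i y"
      using threshold_facts[OF proper[of i] pb[of i] r_gt[of i]] by blast
    have minor: "ereal (inner (a *\<^sub>R x0) y + (c - a/2 * (norm x0)^2)) \<le> g y" for y
    proof -
      have "inner (a *\<^sub>R x0) y + (c - a/2 * (norm x0)^2) \<le> (c - a/2 * (norm (y - x0))^2) + r/2 * q y"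
      proof -
        have "0 \<le> (r - a)/2 * (norm y)^2" using a by simp
        thus ?thesis unfolding q_def nd_sq by (simp add: algebra_simps inner_commute)
      qed
      hence "ereal (inner (a *\<^sub>R x0) y + (c - a/2 * (norm x0)^2)) \<le> ereal (c - a/2 * (norm (y - x0))^2) + ereal (r/2 * q y)"
        by simp
      also have "\<dots> \<le> g y" unfolding g_def using mi by (intro add_right_mono) auto
      finally show ?thesis .
    qed
    show "(\<lambda>x. PA r \<delta> f x (axis i 1)) = f i"
    proof
      fix x
      have "f i x \<le> PA r \<delta> f x (axis i 1)"
      proof (rule dense_le)
        fix al assume al: "al < f i x"
        show "al \<le> PA r \<delta> f x (axis i 1)"
        proof (cases al)
          case MInf thus ?thesis by simp
        next
          case PInf thus ?thesis using al by simp
        next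
          case (real \<alpha>)
          have ag: "ereal (\<alpha> + r/2 * q x) < g x"
            unfolding g_def using al real nm[of i x] by (cases "f i x") auto
          obtain w b where wb: "\<forall>z. ereal (inner w z + b) \<le> g z" and wbx: "\<alpha> + r/2 * q x \<le> inner w x + b"
            using FM[OF cvg lscg nmg domg minor ag] by blast
          define y where "y = (1/r) *\<^sub>R w"
          have ry: "r * inner y v = inner w v" for v unfolding y_def using r0 by simp
          have ey: "ereal (b + r/2 * (norm y)^2) \<le> ereal (e i y)"
            unfolding me[symmetric] moreau_env_def
          proof (rule INF_greatest)
            fix v
            have le: "ereal (inner w v + b) \<le> f i v + ereal (r/2 * q v)" using wb g_def by simp
            show "ereal (b + r/2 * (norm y)^2) \<le> f i v + ereal (r/2 * (norm (v - y))^2)"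
            proof (cases "f i v")
              case (real fv)
              hence "inner w v + b \<le> fv + r/2 * q v" using le by simp
              moreover have "r/2 * (norm (v - y))^2 = r/2*(norm v)^2 - r * inner v y + r/2*(norm y)^2"
                unfolding nd_sq by (simp add: algebra_simps)
              moreover have "r * inner v y = inner w v" using ry[of v] by (simp add: inner_commute)
              ultimately have "b + r/2 * (norm y)^2 \<le> fv + r/2 * (norm (v - y))^2"
                unfolding q_def by linarith
              thus ?thesis using real by simp
            next
              case PInf thus ?thesis by simp
            next
              case MInf thus ?thesis using nm by simp
            qed
          qed
          have "\<alpha> \<le> e i y - r/2 * (norm (y - x))^2"
          proof -
            have "r/2 * (norm (y - x))^2 = r/2*(norm y)^2 - r * inner y x + r/2*(norm x)^2"
              unfolding nd_sq by (simp add: algebra_simps)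
            moreover have "b + r/2 * (norm y)^2 \<le> e i y" using ey by simp
            moreover note ry[of x] wbx
            ultimately show ?thesis unfolding q_def by linarith
          qed
          hence "ereal \<alpha> \<le> ereal (e i y - r/2 * (norm (y - x))^2)" by simp
          also have "\<dots> \<le> PA r \<delta> f x (axis i 1)" unfolding vert by (rule SUP_upper) simp
          finally show ?thesis using real by simp
        qed
      qed
      thus "PA r \<delta> f x (axis i 1) = f i x" using vert_le[of x i] by simp
    qed
  qed
  show ?thesis using part1 part2 part3 by blast
qed

end
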